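(* Let $(M,f,g)$ be an $(m,n)$-hypermodule over a commutative Krasner $(m,n)$-hyperring $(R,f',g')$ with scalar identity $1$, let $Q$ be a proper subhypermodule of $M$, and let $\phi:\mathcal{SH}(M)\to\mathcal{SH}(M)\cup\{\varnothing\}$ be a function such that $\phi(Q)$ is a subhypermodule of $M$ with $\phi(Q)\subseteq Q$. Then the following are equivalent: (1) $Q$ is an $n$-ary $\phi$-classical prime subhypermodule of $M$; (2) $Q/\phi(Q)$ is an $n$-ary weakly classical prime subhypermodule of $M/\phi(Q)$.
   Context: A commutative Krasner $(m,n)$-hyperring with scalar identity $1$ is a triple $(R,f',g')$ where $(R,f')$ is a canonical $m$-ary hypergroup with zero $0$, $(R,g')$ is a commutative $n$-ary semigroup, $g'$ is distributive over $f'$, $0$ is a zero element for $g'$, and $g'(x,1^{(n-1)})=x$. Notation: $x_i^j$ denotes $x_i,\dots,x_j$ and $x^{(k)}$ denotes $x$ repeated $k$ times. An $(m,n)$-hypermodule over $R$ is a triple $(M,f,g)$ with $(M,f)$ a canonical $m$-ary hypergroup with zero $0$ and $g:R^{n-1}\times M\to P^*(M)$ satisfying: $g(r_1^{n-1},f(x_1^m))=f(g(r_1^{n-1},x_1),\dots,g(r_1^{n-1},x_m))$; $g(r_1^{i-1},f'(s_1^m),r_{i+1}^{n-1},x)=f(g(r_1^{i-1},s_1,r_{i+1}^{n-1},x),\dots,g(r_1^{i-1},s_m,r_{i+1}^{n-1},x))$; $g(r_1^{i-1},g'(r_i^{i+n-1}),r_{i+n}^{2n-2},x)=g(r_1^{n-1},g(r_n^{2n-2},x))$;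 $g(r_1^{i-1},0,r_{i+1}^{n-1},x)=\{0\}$; moreover $g(1^{(n-1)},a)=\{a\}$. Operations on subsets are unions over elements. A subhypermodule is a nonempty $N\subseteq M$ with $(N,f)$ an $m$-ary subhypergroup and $g(R^{(n-1)},N)\subseteq N$; $\mathcal{SH}(M)$ is the set of subhypermodules of $M$. A proper subhypermodule $Q$ of $M$ is $n$-ary $\phi$-classical prime if $g(r_1^{n-1},a)\subseteq Q\setminus\phi(Q)$ ($r_i\in R$, $a\in M$) implies $g(r_i,1^{(n-2)},a)\subseteq Q$ for some $1\le i\le n-1$. A proper subhypermodule $Q$ of an $(m,n)$-hypermodule is $n$-ary weakly classical prime if $0\notin G(r_1^{n-1},x)\subseteq Q$ implies $G(r_i,1^{(n-2)},x)\subseteq Q$ for some $i$, where $G$ is the external operation and $0$ the zero. For a subhypermodule $N$, $M/N=\{f(a,N,0^{(m-2)}):a\in M\}$ is an $(m,n)$-hypermodule with $F(f(a_1,N,0^{(m-2)}),\dots,f(a_m,N,0^{(m-2)}))=\{f(t,N,0^{(m-2)}):t\in f(a_1^m)\}$ and $G(r_1^{n-1},f(a,N,0^{(m-2)}))=\{f(z,N,0^{(m-2)}):z\in g(r_1^{n-1},a)\}$, with zero $N$; for a subhypermodule $K\supseteq N$, $K/N=\{f(a,N,0^{(m-2)}):a\in K\}$. *)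

theory Defs
  imports Main "HOL-Library.Multiset"
begin

text \<open>n-ary operations are modelled on lists (of the appropriate length).
  A hyperoperation has values in sets; operations on subsets are unions over elements.\<close>

definition liftop :: "('a list \<Rightarrow> 'b set) \<Rightarrow> 'a set list \<Rightarrow> 'b set" where
  "liftop f Ss = \<Union>{f xs | xs. list_all2 (\<in>) xs Ss}"

definition sing :: "'a \<Rightarrow> 'a set" where
  "sing x = {x}"

definition m_ary_hypergroup :: "nat \<Rightarrow> 'a set \<Rightarrow> ('a list \<Rightarrow> 'a set) \<Rightarrow> bool" where
  "m_ary_hypergroup m H f \<longleftrightarrow>
     (\<forall>xs. length xs = m \<and> set xs \<subseteq> H \<longrightarrow> f xs \<noteq> {} \<and> f xs \<subseteq> H) \<and>
     (\<forall>xs i. length xs = 2*m - 1 \<and> set xs \<subseteq> H \<and> i < m \<longrightarrow>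
        liftop f (map sing (take i xs) @ [f (take m (drop i xs))] @ map sing (drop (i+m) xs))
        = liftop f ([f (take m xs)] @ map sing (drop m xs))) \<and>
     (\<forall>xs i. length xs = m \<and> set xs \<subseteq> H \<and> i < m \<longrightarrow>
        liftop f ((map sing xs)[i := H]) = H)"

definition hinv :: "nat \<Rightarrow> 'a set \<Rightarrow> ('a list \<Rightarrow> 'a set) \<Rightarrow> 'a \<Rightarrow> 'a \<Rightarrow> 'a" where
  "hinv m H f z x = (THE y. y \<in> H \<and> z \<in> f (x # y # replicate (m-2) z))"

definition canonical_hypergroup :: "nat \<Rightarrow> 'a set \<Rightarrow> ('a list \<Rightarrow> 'a set) \<Rightarrow> 'a \<Rightarrow> bool" where
  "canonical_hypergroup m H f z \<longleftrightarrow>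
     m \<ge> 2 \<and> m_ary_hypergroup m H f \<and>
     (\<forall>xs ys. length xs = m \<and> set xs \<subseteq> H \<and> mset ys = mset xs \<longrightarrow> f xs = f ys) \<and>
     z \<in> H \<and>
     (\<forall>x\<in>H. f (x # replicate (m-1) z) = {x}) \<and>
     (\<forall>e\<in>H. (\<forall>x\<in>H. f (x # replicate (m-1) e) = {x}) \<longrightarrow> e = z) \<and>
     (\<forall>x\<in>H. \<exists>!y. y \<in> H \<and> z \<in> f (x # y # replicate (m-2) z)) \<and>
     (\<forall>x xs i. length xs = m \<and> set xs \<subseteq> H \<and> x \<in> f xs \<and> i < m \<longrightarrow>
        xs ! i \<in> f (x # map (hinv m H f z) (take i xs @ drop (Suc i) xs)))"

definition comm_n_ary_semigroup :: "nat \<Rightarrow> 'r set \<Rightarrow> ('r list \<Rightarrow> 'r) \<Rightarrow> bool" where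
  "comm_n_ary_semigroup n R g \<longleftrightarrow>
     n \<ge> 2 \<and>
     (\<forall>xs. length xs = n \<and> set xs \<subseteq> R \<longrightarrow> g xs \<in> R) \<and>
     (\<forall>xs i. length xs = 2*n - 1 \<and> set xs \<subseteq> R \<and> i < n \<longrightarrow>
        g (take i xs @ [g (take n (drop i xs))] @ drop (i+n) xs) = g (g (take n xs) # drop n xs)) \<and>
     (\<forall>xs ys. length xs = n \<and> set xs \<subseteq> R \<and> mset ys = mset xs \<longrightarrow> g xs = g ys)"

definition krasner_hyperring ::
  "nat \<Rightarrow> nat \<Rightarrow> 'r set \<Rightarrow> ('r list \<Rightarrow> 'r set) \<Rightarrow> ('r list \<Rightarrow> 'r) \<Rightarrow> 'r \<Rightarrow> 'r \<Rightarrow> bool" where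
  "krasner_hyperring m n R f' g' zR one \<longleftrightarrow>
     canonical_hypergroup m R f' zR \<and> comm_n_ary_semigroup n R g' \<and>
     (\<forall>xs ys i. length xs = n \<and> set xs \<subseteq> R \<and> length ys = m \<and> set ys \<subseteq> R \<and> i < n \<longrightarrow>
        (\<lambda>y. g' (xs[i := y])) ` f' ys = f' (map (\<lambda>y. g' (xs[i := y])) ys)) \<and>
     (\<forall>xs i. length xs = n \<and> set xs \<subseteq> R \<and> i < n \<longrightarrow> g' (xs[i := zR]) = zR) \<and>
     one \<in> R \<and>
     (\<forall>x\<in>R. g' (x # replicate (n-1) one) = x)"

definition hypermodule ::
  "nat \<Rightarrow> nat \<Rightarrow> 'r set \<Rightarrow> ('r list \<Rightarrow> 'r set) \<Rightarrow> ('r list \<Rightarrow> 'r) \<Rightarrow> 'r \<Rightarrow> 'r \<Rightarrow>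
   'a set \<Rightarrow> ('a list \<Rightarrow> 'a set) \<Rightarrow> ('r list \<Rightarrow> 'a \<Rightarrow> 'a set) \<Rightarrow> 'a \<Rightarrow> bool" where
  "hypermodule m n R f' g' zR one M f g z \<longleftrightarrow>
     krasner_hyperring m n R f' g' zR one \<and>
     canonical_hypergroup m M f z \<and>
     (\<forall>rs x. length rs = n-1 \<and> set rs \<subseteq> R \<and> x \<in> M \<longrightarrow> g rs x \<noteq> {} \<and> g rs x \<subseteq> M) \<and>
     (\<forall>rs xs. length rs = n-1 \<and> set rs \<subseteq> R \<and> length xs = m \<and> set xs \<subseteq> M \<longrightarrow>
        \<Union>(g rs ` f xs) = liftop f (map (g rs) xs)) \<and>
     (\<forall>rs i ss x. length rs = n-1 \<and> set rs \<subseteq> R \<and> i < n-1 \<and> length ss = m \<and> set ss \<subseteq> R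
        \<and> x \<in> M \<longrightarrow>
        \<Union>((\<lambda>s. g (rs[i := s]) x) ` f' ss) = liftop f (map (\<lambda>s. g (rs[i := s]) x) ss)) \<and>
     (\<forall>rs i x. length rs = 2*n - 2 \<and> set rs \<subseteq> R \<and> i < n-1 \<and> x \<in> M \<longrightarrow>
        g (take i rs @ [g' (take n (drop i rs))] @ drop (i+n) rs) x
        = \<Union>(g (take (n-1) rs) ` g (drop (n-1) rs) x)) \<and>
     (\<forall>rs i x. length rs = n-1 \<and> set rs \<subseteq> R \<and> i < n-1 \<and> x \<in> M \<longrightarrow>
        g (rs[i := zR]) x = {z}) \<and>
     (\<forall>x\<in>M. g (replicate (n-1) one) x = {x})"

definition subhypermodule ::
  "nat \<Rightarrow> nat \<Rightarrow> 'r set \<Rightarrow> 'b set \<Rightarrow> ('b list \<Rightarrow> 'b set) \<Rightarrow> ('r list \<Rightarrow> 'b \<Rightarrow> 'b set) \<Rightarrow> 'b set \<Rightarrow> bool" where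
  "subhypermodule m n R M f g N \<longleftrightarrow>
     N \<noteq> {} \<and> N \<subseteq> M \<and> m_ary_hypergroup m N f \<and>
     (\<forall>rs x. length rs = n-1 \<and> set rs \<subseteq> R \<and> x \<in> N \<longrightarrow> g rs x \<subseteq> N)"

definition phi_classical_prime ::
  "nat \<Rightarrow> nat \<Rightarrow> 'r set \<Rightarrow> 'r \<Rightarrow> 'a set \<Rightarrow> ('a list \<Rightarrow> 'a set) \<Rightarrow> ('r list \<Rightarrow> 'a \<Rightarrow> 'a set)
   \<Rightarrow> ('a set \<Rightarrow> 'a set) \<Rightarrow> 'a set \<Rightarrow> bool" where
  "phi_classical_prime m n R one M f g \<phi> Q \<longleftrightarrow>
     subhypermodule m n R M f g Q \<and> Q \<noteq> M \<and>
     (\<forall>rs a. length rs = n-1 \<and> set rs \<subseteq> R \<and> a \<in> M \<and> g rs a \<subseteq> Q - \<phi> Q \<longrightarrow>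
        (\<exists>i<n-1. g (rs ! i # replicate (n-2) one) a \<subseteq> Q))"

definition weakly_classical_prime ::
  "nat \<Rightarrow> nat \<Rightarrow> 'r set \<Rightarrow> 'r \<Rightarrow> 'b set \<Rightarrow> ('b list \<Rightarrow> 'b set) \<Rightarrow> ('r list \<Rightarrow> 'b \<Rightarrow> 'b set)
   \<Rightarrow> 'b \<Rightarrow> 'b set \<Rightarrow> bool" where
  "weakly_classical_prime m n R one M f g z Q \<longleftrightarrow>
     subhypermodule m n R M f g Q \<and> Q \<noteq> M \<and>
     (\<forall>rs x. length rs = n-1 \<and> set rs \<subseteq> R \<and> x \<in> M \<and> z \<notin> g rs x \<and> g rs x \<subseteq> Q \<longrightarrow>
        (\<exists>i<n-1. g (rs ! i # replicate (n-2) one) x \<subseteq> Q))"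

definition coset :: "nat \<Rightarrow> ('a list \<Rightarrow> 'a set) \<Rightarrow> 'a \<Rightarrow> 'a set \<Rightarrow> 'a \<Rightarrow> 'a set" where
  "coset m f z N a = liftop f ([{a}, N] @ replicate (m-2) {z})"

definition qcarrier :: "nat \<Rightarrow> 'a set \<Rightarrow> ('a list \<Rightarrow> 'a set) \<Rightarrow> 'a \<Rightarrow> 'a set \<Rightarrow> 'a set set" where
  "qcarrier m M f z N = coset m f z N ` M"

definition qF :: "nat \<Rightarrow> 'a set \<Rightarrow> ('a list \<Rightarrow> 'a set) \<Rightarrow> 'a \<Rightarrow> 'a set \<Rightarrow> 'a set list \<Rightarrow> 'a set set" where
  "qF m M f z N Xs = {coset m f z N t | t as. length as = m \<and> set as \<subseteq> M \<and>
       map (coset m f z N) as = Xs \<and> t \<in> f as}"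

definition qG :: "nat \<Rightarrow> 'a set \<Rightarrow> ('a list \<Rightarrow> 'a set) \<Rightarrow> ('r list \<Rightarrow> 'a \<Rightarrow> 'a set) \<Rightarrow> 'a \<Rightarrow> 'a set
   \<Rightarrow> 'r list \<Rightarrow> 'a set \<Rightarrow> 'a set set" where
  "qG m M f g z N rs X = {coset m f z N y | y a. a \<in> M \<and> coset m f z N a = X \<and> y \<in> g rs a}"

definition qsub :: "nat \<Rightarrow> ('a list \<Rightarrow> 'a set) \<Rightarrow> 'a \<Rightarrow> 'a set \<Rightarrow> 'a set \<Rightarrow> 'a set set" where
  "qsub m f z N K = coset m f z N ` K"

end

theory Submission
  imports Defs
begin


lemma la2_sing: "list_all2 (\<in>) ws (map sing xs) \<longleftrightarrow> ws = xs"
  by (induction xs arbitrary: ws) (auto simp: sing_def list_all2_Cons2)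

lemma la2_mid: "list_all2 (\<in>) ws (map sing xs @ [S] @ map sing ys) \<longleftrightarrow> (\<exists>t\<in>S. ws = xs @ [t] @ ys)"
proof
  assume "list_all2 (\<in>) ws (map sing xs @ [S] @ map sing ys)"
  then obtain us vs where "ws = us @ vs" "list_all2 (\<in>) us (map sing xs)" "list_all2 (\<in>) vs ([S] @ map sing ys)"
    unfolding list_all2_append2 by blast
  then show "\<exists>t\<in>S. ws = xs @ [t] @ ys" by (auto simp: la2_sing list_all2_Cons2)
next
  assume "\<exists>t\<in>S. ws = xs @ [t] @ ys"
  then obtain t where "t \<in> S" "ws = xs @ [t] @ ys" by blast
  then show "list_all2 (\<in>) ws (map sing xs @ [S] @ map sing ys)"
    by (simp add: list_all2_appendI la2_sing)
qed

lemma liftop_mid: "liftop F (map sing xs @ [S] @ map sing ys) = (\<Union>t\<in>S. F (xs @ [t] @ ys))"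
  unfolding liftop_def la2_mid by blast

lemma liftop_first: "liftop F (S # map sing ys) = (\<Union>t\<in>S. F (t # ys))"
  using liftop_mid[of F "[]" S ys] by simp

lemma map_sing_upd: "i < length xs \<Longrightarrow>
  (map sing xs)[i := S] = map sing (take i xs) @ [S] @ map sing (drop (Suc i) xs)"
  by (simp add: upd_conv_take_nth_drop take_map drop_map)

lemma la2_mem: "list_all2 P xs ys \<Longrightarrow> x \<in> set xs \<Longrightarrow> \<exists>y\<in>set ys. P x y"
  by (induction rule: list_all2_induct) auto

locale qctx =
  fixes m :: nat and M :: "'a set" and f :: "'a list \<Rightarrow> 'a set" and z :: 'a and N :: "'a set"
  assumes can: "canonical_hypergroup m M f z"
  and NM: "N \<subseteq> M" and zN: "z \<in> N" and Nhg: "m_ary_hypergroup m N f"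
begin

abbreviation c where "c \<equiv> coset m f z N"
abbreviation pl where "pl x y \<equiv> f (x # y # replicate (m-2) z)"
abbreviation hi where "hi \<equiv> hinv m M f z"

lemmas D = can[unfolded canonical_hypergroup_def]
lemmas MH = D[THEN conjunct2, THEN conjunct1, unfolded m_ary_hypergroup_def]
lemmas NH = Nhg[unfolded m_ary_hypergroup_def]

lemma m2: "m \<ge> 2" by (rule D[THEN conjunct1])
lemma clos: "length xs = m \<Longrightarrow> set xs \<subseteq> M \<Longrightarrow> f xs \<noteq> {} \<and> f xs \<subseteq> M"
  using MH[THEN conjunct1] by blast
lemma assoc: "length xs = 2*m-1 \<Longrightarrow> set xs \<subseteq> M \<Longrightarrow> i<m \<Longrightarrow>
        liftop f (map sing (take i xs) @ [f (take m (drop i xs))] @ map sing (drop (i+m) xs))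
        = liftop f ([f (take m xs)] @ map sing (drop m xs))"
  using MH[THEN conjunct2, THEN conjunct1] by blast
lemma comm: "length xs = m \<Longrightarrow> set xs \<subseteq> M \<Longrightarrow> mset ys = mset xs \<Longrightarrow> f xs = f ys"
  using D[THEN conjunct2, THEN conjunct2, THEN conjunct1] by blast
lemma zM: "z \<in> M" by (rule D[THEN conjunct2, THEN conjunct2, THEN conjunct2, THEN conjunct1])
lemma ident: "x \<in> M \<Longrightarrow> f (x # replicate (m-1) z) = {x}"
  using D[THEN conjunct2, THEN conjunct2, THEN conjunct2, THEN conjunct2, THEN conjunct1] by blast
lemma inv_ex: "x \<in> M \<Longrightarrow> \<exists>!y. y \<in> M \<and> z \<in> f (x # y # replicate (m-2) z)"
  using D[THEN conjunct2, THEN conjunct2, THEN conjunct2, THEN conjunct2, THEN conjunct2, THEN conjunct2, THEN conjunct1]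
  by blast
lemma inv_ax: "length xs = m \<Longrightarrow> set xs \<subseteq> M \<Longrightarrow> x \<in> f xs \<Longrightarrow> i < m \<Longrightarrow>
        xs ! i \<in> f (x # map hi (take i xs @ drop (Suc i) xs))"
  using D[THEN conjunct2, THEN conjunct2, THEN conjunct2, THEN conjunct2, THEN conjunct2, THEN conjunct2, THEN conjunct2]
  by blast
lemma Nclos: "length xs = m \<Longrightarrow> set xs \<subseteq> N \<Longrightarrow> f xs \<subseteq> N"
  using NH[THEN conjunct1] by blast
lemma Nrep: "length xs = m \<Longrightarrow> set xs \<subseteq> N \<Longrightarrow> i < m \<Longrightarrow> liftop f ((map sing xs)[i:=N]) = N"
  using NH[THEN conjunct2, THEN conjunct2] by blast

lemma mk: "\<exists>k. m = Suc (Suc k)"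
proof -
  have "m = Suc (Suc (m-2))" using m2 by simp
  then show ?thesis by blast
qed

lemma repz: "replicate (m-1) z = z # replicate (m-2) z"
  using mk by auto

lemma repM: "set (replicate k z) \<subseteq> M" using zM by (simp add: set_replicate_conv_if)
lemma repN: "set (replicate k z) \<subseteq> N" using zN by (simp add: set_replicate_conv_if)

lemma pl_z: "x \<in> M \<Longrightarrow> pl x z = {x}"
  using ident repz by simp

lemma coset_lift: "c x = liftop f (map sing [x] @ [N] @ map sing (replicate (m-2) z))"
  unfolding coset_def by (simp add: sing_def)

lemma coset_eq: "c x = (\<Union>\<nu>\<in>N. pl x \<nu>)"
  unfolding coset_lift liftop_mid by simp

lemma L0: "x \<in> M \<Longrightarrow> x \<in> c x"
proof -
  assume x: "x \<in> M"
  have "x \<in> pl x z" using pl_z[OF x] by simp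
  thus ?thesis unfolding coset_eq using zN by blast
qed

lemma len_pl: "length (x # y # replicate (m-2) z) = m"
  using m2 by simp

lemma plM: "x \<in> M \<Longrightarrow> y \<in> M \<Longrightarrow> pl x y \<subseteq> M"
  using clos[OF len_pl, of x y] repM[of "m-2"] by auto

lemma plN: "x \<in> N \<Longrightarrow> y \<in> N \<Longrightarrow> pl x y \<subseteq> N"
  using Nclos[OF len_pl, of x y] repN[of "m-2"] by auto

lemma cM: "x \<in> M \<Longrightarrow> c x \<subseteq> M"
  using coset_eq plM NM by blast

lemma cN: "x \<in> N \<Longrightarrow> c x = N"
proof -
  assume x: "x \<in> N"
  have "(map sing (x # replicate (m-1) z))[1 := N] = map sing [x] @ [N] @ map sing (replicate (m-2) z)"
    using repz by simp
  then have "liftop f (map sing [x] @ [N] @ map sing (replicate (m-2) z)) = N"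
    using Nrep[of "x # replicate (m-1) z" 1] m2 x zN by auto
  then show ?thesis using coset_lift by simp
qed


lemma Lsub: assumes x: "x \<in> M" and y: "y \<in> M" and nu: "\<nu> \<in> N" and xy: "x \<in> pl y \<nu>"
  shows "c x \<subseteq> c y"
proof
  fix w assume "w \<in> c x"
  then obtain \<nu>2 where nu2: "\<nu>2 \<in> N" and w: "w \<in> pl x \<nu>2" unfolding coset_eq by blast
  obtain k where mk: "m = Suc (Suc k)" using mk by blast
  have nuM: "\<nu> \<in> M" "\<nu>2 \<in> M" using nu nu2 NM by auto
  have A: "liftop f (map sing [y] @ [f (\<nu> # replicate k z @ [\<nu>2])] @ map sing (replicate k z))
     = liftop f ([f (y # \<nu> # replicate k z)] @ map sing (\<nu>2 # replicate k z))"
    using assoc[of "y # \<nu> # replicate k z @ \<nu>2 # replicate k z" 1] mk y nuM repM[of k]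
    by simp
  have "w \<in> liftop f ([f (y # \<nu> # replicate k z)] @ map sing (\<nu>2 # replicate k z))"
    unfolding append.simps liftop_first using xy w mk by auto
  then have "w \<in> liftop f (map sing [y] @ [f (\<nu> # replicate k z @ [\<nu>2])] @ map sing (replicate k z))"
    using A by simp
  then obtain t where t: "t \<in> f (\<nu> # replicate k z @ [\<nu>2])" and wt: "w \<in> f (y # t # replicate k z)"
    unfolding liftop_mid by auto
  have "t \<in> N" using t Nclos[of "\<nu> # replicate k z @ [\<nu>2]"] mk nu nu2 repN[of k] by auto
  then show "w \<in> c y" unfolding coset_eq using wt mk by auto
qed

lemma hi_spec: "x \<in> M \<Longrightarrow> hi x \<in> M \<and> z \<in> pl x (hi x)"
  unfolding hinv_def by (rule theI'[OF inv_ex])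

lemma hi_unique: "x \<in> M \<Longrightarrow> y \<in> M \<Longrightarrow> z \<in> pl x y \<Longrightarrow> hi x = y"
  unfolding hinv_def by (rule the1_equality[OF inv_ex]) auto

lemma hi_z: "hi z = z"
  using hi_unique[OF zM zM] pl_z[OF zM] by simp

lemma hi_N: assumes nu: "\<nu> \<in> N" shows "hi \<nu> \<in> N"
proof -
  have "z \<in> c \<nu>" using cN[OF nu] zN by simp
  then obtain \<nu>' where "\<nu>' \<in> N" "z \<in> pl \<nu> \<nu>'" unfolding coset_eq by blast
  then show ?thesis using hi_unique[of \<nu> \<nu>'] nu NM by auto
qed

lemma Lsym: assumes y: "y \<in> M" and nu: "\<nu> \<in> N" and xy: "x \<in> pl y \<nu>"
  shows "y \<in> pl x (hi \<nu>)"
proof -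
  have "(y # \<nu> # replicate (m-2) z) ! 0 \<in> f (x # map hi (take 0 (y # \<nu> # replicate (m-2) z) @ drop (Suc 0) (y # \<nu> # replicate (m-2) z)))"
    using inv_ax[OF len_pl, of y \<nu> x 0] y nu NM repM[of "m-2"] xy m2 by auto
  then show ?thesis by (simp add: hi_z)
qed

lemma Leq: assumes x: "x \<in> M" and y: "y \<in> M" and nu: "\<nu> \<in> N" and xy: "x \<in> pl y \<nu>"
  shows "c x = c y"
  using Lsub[OF x y nu xy] Lsub[OF y x hi_N[OF nu] Lsym[OF y nu xy]] by blast

lemma L1: "x \<in> M \<Longrightarrow> c x = c y \<Longrightarrow> \<exists>\<nu>\<in>N. x \<in> pl y \<nu>"
  using L0[of x] unfolding coset_eq by auto

lemma WD1: assumes a: "a \<in> M" and b: "b \<in> M" and ab: "c a = c b" and ys: "set ys \<subseteq> M"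
  and len: "length ys = m - 1" and u: "u \<in> f (a # ys)"
  shows "\<exists>u'\<in>f (b # ys). c u = c u'"
proof -
  obtain \<nu> where nu: "\<nu> \<in> N" and anu: "a \<in> pl b \<nu>" using L1[OF a ab] by blast
  obtain k where mk: "m = Suc (Suc k)" using mk by blast
  have nuM: "\<nu> \<in> M" using nu NM by auto
  have A: "liftop f (map sing (\<nu> # replicate k z) @ [f (b # ys)] @ map sing [])
     = liftop f ([f (\<nu> # replicate k z @ [b])] @ map sing ys)"
    using assoc[of "\<nu> # replicate k z @ b # ys" "Suc k"] mk b nuM repM[of k] ys len
    by simp
  have C1: "f (\<nu> # replicate k z @ [b]) = pl b \<nu>"
    by (rule comm) (use mk b nuM repM[of k] in auto)
  have "u \<in> liftop f ([f (\<nu> # replicate k z @ [b])] @ map sing ys)"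
    unfolding append.simps liftop_first C1 using anu u by auto
  then have "u \<in> liftop f (map sing (\<nu> # replicate k z) @ [f (b # ys)] @ map sing [])"
    using A by simp
  then obtain u' where u': "u' \<in> f (b # ys)" and uu: "u \<in> f (\<nu> # replicate k z @ [u'])"
    unfolding liftop_mid by auto
  have u'M: "u' \<in> M" using clos[of "b # ys"] u' b ys len mk by auto
  have uM: "u \<in> M" using clos[of "a # ys"] u a ys len mk by auto
  have C2: "f (\<nu> # replicate k z @ [u']) = pl u' \<nu>"
    by (rule comm) (use mk u'M nuM repM[of k] in auto)
  have "c u = c u'" using Leq[OF uM u'M nu] uu C2 by simp
  then show ?thesis using u' by blast
qed

lemma WDpos: assumes a: "a \<in> M" and b: "b \<in> M" and ab: "c a = c b" and pre: "set pre \<subseteq> M"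
  and post: "set post \<subseteq> M" and len: "length (pre @ a # post) = m" and u: "u \<in> f (pre @ a # post)"
  shows "\<exists>u'\<in>f (pre @ b # post). c u = c u'"
proof -
  have E1: "f (pre @ a # post) = f (a # pre @ post)"
    by (rule comm) (use a pre post len in auto)
  have E2: "f (pre @ b # post) = f (b # pre @ post)"
    by (rule comm) (use b pre post len in auto)
  show ?thesis using WD1[OF a b ab, of "pre @ post" u] pre post len u E1 E2 by auto
qed

lemma WDall: "length as = length bs \<Longrightarrow> set pre \<subseteq> M \<Longrightarrow> set post \<subseteq> M \<Longrightarrow> set as \<subseteq> M \<Longrightarrow> set bs \<subseteq> M
   \<Longrightarrow> length (pre @ as @ post) = m \<Longrightarrow> map c as = map c bs \<Longrightarrow> u \<in> f (pre @ as @ post) \<Longrightarrow>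
   \<exists>u'\<in>f (pre @ bs @ post). c u = c u'"
proof (induction as bs arbitrary: pre u rule: list_induct2)
  case Nil
  then show ?case by auto
next
  case (Cons a as b bs)
  have a: "a \<in> M" and b: "b \<in> M" and as: "set as \<subseteq> M" and bs: "set bs \<subseteq> M"
    using Cons.prems by auto
  have cab: "c a = c b" and cas: "map c as = map c bs" using Cons.prems(6) by auto
  have post': "set (as @ post) \<subseteq> M" using as Cons.prems(2) by auto
  have len': "length (pre @ a # as @ post) = m" using Cons.prems(5) by simp
  have u: "u \<in> f (pre @ a # as @ post)" using Cons.prems(7) by simp
  obtain u1 where u1: "u1 \<in> f (pre @ b # as @ post)" and cu1: "c u = c u1"
    using WDpos[OF a b cab Cons.prems(1) post' len' u] by blast
  have pre': "set (pre @ [b]) \<subseteq> M" using Cons.prems(1) b by auto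
  have len'': "length ((pre @ [b]) @ as @ post) = m" using Cons.prems(5) by simp
  have u1': "u1 \<in> f ((pre @ [b]) @ as @ post)" using u1 by simp
  obtain u' where u': "u' \<in> f ((pre @ [b]) @ bs @ post)" and cu': "c u1 = c u'"
    using Cons.IH[OF pre' Cons.prems(2) as bs len'' cas u1'] by blast
  show ?case using u' cu' cu1 by auto
qed

lemma WD: assumes "length as = m" "length bs = m" "set as \<subseteq> M" "set bs \<subseteq> M"
   "map c as = map c bs" "u \<in> f as" shows "\<exists>u'\<in>f bs. c u = c u'"
  using WDall[of as bs "[]" "[]" u] assms by simp

lemma QF: assumes len: "length as = m" and as: "set as \<subseteq> M"
  shows "qF m M f z N (map c as) = c ` f as"
proof
  show "c ` f as \<subseteq> qF m M f z N (map c as)" unfolding qF_def using len as by blast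
  show "qF m M f z N (map c as) \<subseteq> c ` f as"
  proof
    fix X assume "X \<in> qF m M f z N (map c as)"
    then obtain t bs where "X = c t" "length bs = m" "set bs \<subseteq> M" "map c bs = map c as" "t \<in> f bs"
      unfolding qF_def by blast
    then obtain u' where "u' \<in> f as" "c t = c u'" using WD[of bs as t] len as by blast
    then show "X \<in> c ` f as" using \<open>X = c t\<close> by blast
  qed
qed


lemma ASSOC_Q: assumes len: "length qs = 2*m-1" and qs: "set qs \<subseteq> M" and j: "j < m"
  shows "liftop (qF m M f z N) (map sing (take j (map c qs)) @ [qF m M f z N (take m (drop j (map c qs)))] @ map sing (drop (j+m) (map c qs)))
   = c ` liftop f (map sing (take j qs) @ [f (take m (drop j qs))] @ map sing (drop (j+m) qs))"
proof -
  have ml: "length (take m (drop j qs)) = m" using len j by simp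
  have ms: "set (take m (drop j qs)) \<subseteq> M" using qs by (meson order.trans set_drop_subset set_take_subset)
  have fm: "f (take m (drop j qs)) \<subseteq> M" using clos[OF ml ms] by auto
  have s1: "set (take j qs) \<subseteq> M" "set (drop (j+m) qs) \<subseteq> M"
    using qs by (meson order.trans set_drop_subset set_take_subset)+
  have "liftop (qF m M f z N) (map sing (take j (map c qs)) @ [qF m M f z N (take m (drop j (map c qs)))] @ map sing (drop (j+m) (map c qs)))
      = (\<Union>Y\<in>c ` f (take m (drop j qs)). qF m M f z N (map c (take j qs) @ [Y] @ map c (drop (j+m) qs)))"
    unfolding take_map drop_map liftop_mid QF[OF ml ms] by simp
  also have "\<dots> = (\<Union>t\<in>f (take m (drop j qs)). qF m M f z N (map c (take j qs @ [t] @ drop (j+m) qs)))"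
    by simp
  also have "\<dots> = (\<Union>t\<in>f (take m (drop j qs)). c ` f (take j qs @ [t] @ drop (j+m) qs))"
  proof (rule SUP_cong[OF refl])
    fix t assume "t \<in> f (take m (drop j qs))"
    then have "t \<in> M" using fm by auto
    then show "qF m M f z N (map c (take j qs @ [t] @ drop (j+m) qs)) = c ` f (take j qs @ [t] @ drop (j+m) qs)"
    proof -
      have L: "length (take j qs @ [t] @ drop (j+m) qs) = m" using len j by simp
      have S: "set (take j qs @ [t] @ drop (j+m) qs) \<subseteq> M" using s1 \<open>t \<in> M\<close> by auto
      show ?thesis by (rule QF[OF L S])
    qed
  qed
  also have "\<dots> = c ` liftop f (map sing (take j qs) @ [f (take m (drop j qs))] @ map sing (drop (j+m) qs))"
    by (simp only: liftop_mid image_UN)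
  finally show ?thesis .
qed

lemma REP_Q: assumes len: "length qs = m" and qs: "set qs \<subseteq> M" and i: "i < m" and QM: "Q \<subseteq> M"
  shows "liftop (qF m M f z N) ((map sing (map c qs))[i := c ` Q]) = c ` liftop f ((map sing qs)[i := Q])"
proof -
  have s1: "set (take i qs) \<subseteq> M" "set (drop (Suc i) qs) \<subseteq> M"
    using qs by (meson order.trans set_drop_subset set_take_subset)+
  have U: "(map sing (map c qs))[i := c ` Q] = map sing (take i (map c qs)) @ [c ` Q] @ map sing (drop (Suc i) (map c qs))"
    by (rule map_sing_upd) (use len i in simp)
  have U2: "(map sing qs)[i := Q] = map sing (take i qs) @ [Q] @ map sing (drop (Suc i) qs)"
    by (rule map_sing_upd) (use len i in simp)
  have "liftop (qF m M f z N) ((map sing (map c qs))[i := c ` Q])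
     = (\<Union>Y\<in>c ` Q. qF m M f z N (take i (map c qs) @ [Y] @ drop (Suc i) (map c qs)))"
    unfolding U liftop_mid by simp
  also have "\<dots> = (\<Union>q\<in>Q. qF m M f z N (map c (take i qs @ [q] @ drop (Suc i) qs)))"
    by (simp add: take_map drop_map)
  also have "\<dots> = (\<Union>q\<in>Q. c ` f (take i qs @ [q] @ drop (Suc i) qs))"
  proof (rule SUP_cong[OF refl])
    fix q assume "q \<in> Q"
    then have "q \<in> M" using QM by auto
    then show "qF m M f z N (map c (take i qs @ [q] @ drop (Suc i) qs)) = c ` f (take i qs @ [q] @ drop (Suc i) qs)"
    proof -
      have L: "length (take i qs @ [q] @ drop (Suc i) qs) = m" using len i by simp
      have S: "set (take i qs @ [q] @ drop (Suc i) qs) \<subseteq> M" using s1 \<open>q \<in> M\<close> by auto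
      show ?thesis by (rule QF[OF L S])
    qed
  qed
  also have "\<dots> = c ` liftop f ((map sing qs)[i := Q])"
    by (simp only: U2 liftop_mid image_UN)
  finally show ?thesis .
qed

lemma LQ: assumes QM: "Q \<subseteq> M" and NQ: "N \<subseteq> Q"
  and Qc: "\<And>xs. length xs = m \<Longrightarrow> set xs \<subseteq> Q \<Longrightarrow> f xs \<subseteq> Q"
  and x: "x \<in> M" and q: "q \<in> Q" and cx: "c x = c q"
  shows "x \<in> Q"
proof -
  obtain \<nu> where "\<nu> \<in> N" "x \<in> pl q \<nu>" using L1[OF x cx] by blast
  moreover have "set (q # \<nu> # replicate (m-2) z) \<subseteq> Q" using q NQ zN calculation(1) repN[of "m-2"] by auto
  ultimately show ?thesis using Qc[OF len_pl] by blast
qed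

end

lemma reps: "set Xs \<subseteq> h ` A \<Longrightarrow> \<exists>as. map h as = Xs \<and> set as \<subseteq> A"
proof (induction Xs)
  case Nil then show ?case by simp
next
  case (Cons X Xs)
  then obtain as a where "map h as = Xs" "set as \<subseteq> A" "a \<in> A" "h a = X" by auto
  then show ?case by (intro exI[of _ "a # as"]) auto
qed



theorem mainTheorem12:
  fixes R :: "'r set" and f' :: "'r list \<Rightarrow> 'r set" and g' :: "'r list \<Rightarrow> 'r"
    and zR one :: 'r
    and M :: "'a set" and f :: "'a list \<Rightarrow> 'a set" and g :: "'r list \<Rightarrow> 'a \<Rightarrow> 'a set"
    and z :: 'a and Q :: "'a set" and \<phi> :: "'a set \<Rightarrow> 'a set"
  assumes hm: "hypermodule m n R f' g' zR one M f g z"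
    and Qsub: "subhypermodule m n R M f g Q" and Qprop: "Q \<noteq> M"
    and phi_range: "\<forall>N. subhypermodule m n R M f g N \<longrightarrow>
                       \<phi> N = {} \<or> subhypermodule m n R M f g (\<phi> N)"
    and phiQ: "subhypermodule m n R M f g (\<phi> Q)" and phiQ_le: "\<phi> Q \<subseteq> Q"
  shows "phi_classical_prime m n R one M f g \<phi> Q \<longleftrightarrow>
         weakly_classical_prime m n R one
           (qcarrier m M f z (\<phi> Q)) (qF m M f z (\<phi> Q)) (qG m M f g z (\<phi> Q))
           (\<phi> Q) (qsub m f z (\<phi> Q) Q)"
proof -
  define N where "N = \<phi> Q"
  have NQ: "N \<subseteq> Q" using phiQ_le N_def by simp
  note H = hm[unfolded hypermodule_def]
  have kr: "krasner_hyperring m n R f' g' zR one" by (rule H[THEN conjunct1])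
  have can: "canonical_hypergroup m M f z" by (rule H[THEN conjunct2, THEN conjunct1])
  note K = kr[unfolded krasner_hyperring_def]
  have n2: "n \<ge> 2" by (rule K[THEN conjunct2, THEN conjunct1, unfolded comm_n_ary_semigroup_def, THEN conjunct1])
  have zR: "zR \<in> R"
    by (rule K[THEN conjunct1, unfolded canonical_hypergroup_def, THEN conjunct2, THEN conjunct2, THEN conjunct2, THEN conjunct1])
  have oneR: "one \<in> R" by (rule K[THEN conjunct2, THEN conjunct2, THEN conjunct2, THEN conjunct2, THEN conjunct1])
  have gM: "\<And>rs x. length rs = n-1 \<Longrightarrow> set rs \<subseteq> R \<Longrightarrow> x \<in> M \<Longrightarrow> g rs x \<subseteq> M"
    using H[THEN conjunct2, THEN conjunct2, THEN conjunct1] by blast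
  have gdist: "\<And>rs xs. length rs = n-1 \<Longrightarrow> set rs \<subseteq> R \<Longrightarrow> length xs = m \<Longrightarrow> set xs \<subseteq> M \<Longrightarrow>
        \<Union>(g rs ` f xs) = liftop f (map (g rs) xs)"
    using H[THEN conjunct2, THEN conjunct2, THEN conjunct2, THEN conjunct1] by blast
  have gz: "\<And>rs i x. length rs = n-1 \<Longrightarrow> set rs \<subseteq> R \<Longrightarrow> i < n-1 \<Longrightarrow> x \<in> M \<Longrightarrow> g (rs[i := zR]) x = {z}"
    using H[THEN conjunct2, THEN conjunct2, THEN conjunct2, THEN conjunct2, THEN conjunct2, THEN conjunct2, THEN conjunct1] by blast
  have Nsub: "subhypermodule m n R M f g N" using phiQ N_def by simp
  note NS = Nsub[unfolded subhypermodule_def]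
  have Nne: "N \<noteq> {}" by (rule NS[THEN conjunct1])
  have NM: "N \<subseteq> M" by (rule NS[THEN conjunct2, THEN conjunct1])
  have Nhg: "m_ary_hypergroup m N f" by (rule NS[THEN conjunct2, THEN conjunct2, THEN conjunct1])
  have Ng: "\<And>rs x. length rs = n-1 \<Longrightarrow> set rs \<subseteq> R \<Longrightarrow> x \<in> N \<Longrightarrow> g rs x \<subseteq> N"
    using NS[THEN conjunct2, THEN conjunct2, THEN conjunct2] by blast
  note QS = Qsub[unfolded subhypermodule_def]
  have QM: "Q \<subseteq> M" by (rule QS[THEN conjunct2, THEN conjunct1])
  have Qg: "\<And>rs x. length rs = n-1 \<Longrightarrow> set rs \<subseteq> R \<Longrightarrow> x \<in> Q \<Longrightarrow> g rs x \<subseteq> Q"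
    using QS[THEN conjunct2, THEN conjunct2, THEN conjunct2] by blast
  note QH = QS[THEN conjunct2, THEN conjunct2, THEN conjunct1, unfolded m_ary_hypergroup_def]
  have Qc: "\<And>xs. length xs = m \<Longrightarrow> set xs \<subseteq> Q \<Longrightarrow> f xs \<subseteq> Q"
    using QH[THEN conjunct1] by blast
  have Qrep: "\<And>xs i. length xs = m \<Longrightarrow> set xs \<subseteq> Q \<Longrightarrow> i < m \<Longrightarrow> liftop f ((map sing xs)[i:=Q]) = Q"
    using QH[THEN conjunct2, THEN conjunct2] by blast
  have Qnf: "\<And>xs. length xs = m \<Longrightarrow> set xs \<subseteq> Q \<Longrightarrow> f xs \<noteq> {}"
    using QH[THEN conjunct1] by blast
  have zN: "z \<in> N"
  proof -
    obtain x where x: "x \<in> N" using Nne by auto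
    have upd: "(replicate (n-1) zR)[0 := zR] = replicate (n-1) zR"
      using n2 list_update_id[of "replicate (n-1) zR" 0] by simp
    have "g ((replicate (n-1) zR)[0 := zR]) x = {z}"
      using gz[of "replicate (n-1) zR" 0 x] n2 zR x NM by auto
    moreover have "g (replicate (n-1) zR) x \<subseteq> N"
      using Ng[of "replicate (n-1) zR" x] n2 zR x by (auto simp: set_replicate_conv_if)
    ultimately have "{z} \<subseteq> N" using upd by simp
    then show ?thesis by auto
  qed
  interpret qctx m M f z N
    by unfold_locales (use can NM zN Nhg in auto)
  let ?c = "coset m f z N"
  have L4: "\<And>rs a a' y. length rs = n-1 \<Longrightarrow> set rs \<subseteq> R \<Longrightarrow> a \<in> M \<Longrightarrow> a' \<in> M \<Longrightarrow> ?c a' = ?c a \<Longrightarrow>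
       y \<in> g rs a' \<Longrightarrow> \<exists>w ws. y \<in> f (w # ws) \<and> w \<in> g rs a \<and> set ws \<subseteq> N \<and> length ws = m - 1"
  proof -
    fix rs a a' y assume rs: "length rs = n-1" "set rs \<subseteq> R" and a: "a \<in> M" and a': "a' \<in> M"
      and ca: "?c a' = ?c a" and y: "y \<in> g rs a'"
    obtain \<nu> where nu: "\<nu> \<in> N" and anu: "a' \<in> f (a # \<nu> # replicate (m-2) z)" using L1[OF a' ca] by blast
    have "y \<in> \<Union>(g rs ` f (a # \<nu> # replicate (m-2) z))" using y anu by auto
    also have "\<dots> = liftop f (map (g rs) (a # \<nu> # replicate (m-2) z))"
      using gdist[OF rs len_pl] a nu NM repM[of "m-2"] by auto
    finally obtain ws0 where w0: "list_all2 (\<in>) ws0 (map (g rs) (a # \<nu> # replicate (m-2) z))" and yw: "y \<in> f ws0"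
      unfolding liftop_def by auto
    then obtain w ws where ws0: "ws0 = w # ws" and w: "w \<in> g rs a"
      and ws: "list_all2 (\<in>) ws (map (g rs) (\<nu> # replicate (m-2) z))"
      by (auto simp: list_all2_Cons2)
    have "set ws \<subseteq> N"
    proof
      fix v assume "v \<in> set ws"
      then obtain S where "S \<in> set (map (g rs) (\<nu> # replicate (m-2) z))" "v \<in> S" using la2_mem[OF ws] by blast
      moreover have "\<forall>S \<in> set (map (g rs) (\<nu> # replicate (m-2) z)). S \<subseteq> N"
        using Ng[OF rs] nu zN by (auto simp: set_replicate_conv_if)
      ultimately show "v \<in> N" by blast
    qed
    moreover have "length ws = m - 1" using list_all2_lengthD[OF ws] m2 by simp
    ultimately show "\<exists>w ws. y \<in> f (w # ws) \<and> w \<in> g rs a \<and> set ws \<subseteq> N \<and> length ws = m - 1"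
      using yw ws0 w by blast
  qed
  have E2: "\<And>s a. length s = n-1 \<Longrightarrow> set s \<subseteq> R \<Longrightarrow> a \<in> M \<Longrightarrow>
      qG m M f g z N s (?c a) \<subseteq> ?c ` Q \<longleftrightarrow> g s a \<subseteq> Q"
  proof
    fix s a assume s: "length s = n-1" "set s \<subseteq> R" and a: "a \<in> M"
    {
      assume H: "qG m M f g z N s (?c a) \<subseteq> ?c ` Q"
      show "g s a \<subseteq> Q"
      proof
        fix y assume y: "y \<in> g s a"
        then have "?c y \<in> qG m M f g z N s (?c a)" unfolding qG_def using a by blast
        then obtain q where "q \<in> Q" "?c y = ?c q" using H by auto
        moreover have "y \<in> M" using gM[OF s a] y by auto
        ultimately show "y \<in> Q" using LQ[OF QM NQ Qc] by blast
      qed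
    }
    {
      assume H: "g s a \<subseteq> Q"
      show "qG m M f g z N s (?c a) \<subseteq> ?c ` Q"
      proof
        fix X assume "X \<in> qG m M f g z N s (?c a)"
        then obtain y a' where X: "X = ?c y" and a': "a' \<in> M" "?c a' = ?c a" and y: "y \<in> g s a'"
          unfolding qG_def by blast
        obtain w ws where yw: "y \<in> f (w # ws)" and w: "w \<in> g s a" and ws: "set ws \<subseteq> N" "length ws = m - 1"
          using L4[OF s a a' y] by blast
        have "y \<in> Q" using Qc[of "w # ws"] yw w ws H NQ m2 by auto
        then show "X \<in> ?c ` Q" using X by blast
      qed
    }
  qed
  have E1: "\<And>s a. length s = n-1 \<Longrightarrow> set s \<subseteq> R \<Longrightarrow> a \<in> M \<Longrightarrow>
      (N \<notin> qG m M f g z N s (?c a) \<and> qG m M f g z N s (?c a) \<subseteq> ?c ` Q) \<longleftrightarrow> g s a \<subseteq> Q - N"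
  proof
    fix s a assume s: "length s = n-1" "set s \<subseteq> R" and a: "a \<in> M"
    {
      assume H: "N \<notin> qG m M f g z N s (?c a) \<and> qG m M f g z N s (?c a) \<subseteq> ?c ` Q"
      have "g s a \<subseteq> Q" using E2[OF s a] H by blast
      moreover have "g s a \<inter> N = {}"
      proof (rule ccontr)
        assume "g s a \<inter> N \<noteq> {}"
        then obtain y where y: "y \<in> g s a" "y \<in> N" by blast
        then have "?c y \<in> qG m M f g z N s (?c a)" unfolding qG_def using a by blast
        then show False using H cN[OF y(2)] by simp
      qed
      ultimately show "g s a \<subseteq> Q - N" by blast
    }
    {
      assume H: "g s a \<subseteq> Q - N"
      have "qG m M f g z N s (?c a) \<subseteq> ?c ` Q" using E2[OF s a] H by blast
      moreover have "N \<notin> qG m M f g z N s (?c a)"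
      proof
        assume "N \<in> qG m M f g z N s (?c a)"
        then obtain y a' where X: "N = ?c y" and a': "a' \<in> M" "?c a' = ?c a" and y: "y \<in> g s a'"
          unfolding qG_def by blast
        have yM: "y \<in> M" using gM[OF s a'(1)] y by auto
        have yN: "y \<in> N" using L0[OF yM] X by simp
        obtain w ws where yw: "y \<in> f (w # ws)" and w: "w \<in> g s a" and ws: "set ws \<subseteq> N" "length ws = m - 1"
          using L4[OF s a a' y] by blast
        have wM: "w \<in> M" using gM[OF s a] w by auto
        have "(w # ws) ! 0 \<in> f (y # map hi (take 0 (w # ws) @ drop (Suc 0) (w # ws)))"
          using inv_ax[of "w # ws" y 0] ws wM NM yw m2 by auto
        then have "w \<in> f (y # map hi ws)" by simp
        moreover have "f (y # map hi ws) \<subseteq> N"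
          using Nclos[of "y # map hi ws"] ws yN hi_N m2 by auto
        ultimately show False using w H by auto
      qed
      ultimately show "N \<notin> qG m M f g z N s (?c a) \<and> qG m M f g z N s (?c a) \<subseteq> ?c ` Q" by blast
    }
  qed
  have SUBQ: "subhypermodule m n R (?c ` M) (qF m M f z N) (qG m M f g z N) (?c ` Q)"
    unfolding subhypermodule_def
  proof (intro conjI allI impI)
    show "?c ` Q \<noteq> {}" using zN NQ by auto
    show "?c ` Q \<subseteq> ?c ` M" by (rule image_mono[OF QM])
    show "m_ary_hypergroup m (?c ` Q) (qF m M f z N)"
      unfolding m_ary_hypergroup_def
    proof (intro conjI allI impI)
      fix Xs assume H: "length Xs = m \<and> set Xs \<subseteq> ?c ` Q"
      obtain qs where qs1: "map ?c qs = Xs" and qs2: "set qs \<subseteq> Q"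
        using reps[OF H[THEN conjunct2]] by blast
      have "length (map ?c qs) = m" unfolding qs1 by (rule H[THEN conjunct1])
      then have l: "length qs = m" by (simp only: length_map)
      have qsM: "set qs \<subseteq> M" using qs2 QM by (rule order.trans)
      have e: "qF m M f z N Xs = ?c ` f qs" using QF[OF l qsM] unfolding qs1 .
      show "qF m M f z N Xs \<noteq> {}" unfolding e using Qnf[OF l qs2] by simp
      show "qF m M f z N Xs \<subseteq> ?c ` Q" unfolding e using Qc[OF l qs2] by (rule image_mono)
    next
      fix Xs i assume H: "length Xs = 2*m-1 \<and> set Xs \<subseteq> ?c ` Q \<and> i < m"
      obtain qs where qs1: "map ?c qs = Xs" and qs2: "set qs \<subseteq> Q"
        using reps[OF H[THEN conjunct2, THEN conjunct1]] by blast
      have "length (map ?c qs) = 2*m-1" unfolding qs1 by (rule H[THEN conjunct1])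
      then have l: "length qs = 2*m-1" by (simp only: length_map)
      have qsM: "set qs \<subseteq> M" using qs2 QM by (rule order.trans)
      have iH: "i < m" by (rule H[THEN conjunct2, THEN conjunct2])
      have m0: "0 < m" using m2 by simp
      have "liftop (qF m M f z N) (map sing (take i (map ?c qs)) @ [qF m M f z N (take m (drop i (map ?c qs)))] @ map sing (drop (i+m) (map ?c qs)))
           = ?c ` liftop f (map sing (take i qs) @ [f (take m (drop i qs))] @ map sing (drop (i+m) qs))"
        by (rule ASSOC_Q[OF l qsM iH])
      also have "\<dots> = ?c ` liftop f ([f (take m qs)] @ map sing (drop m qs))"
        by (simp only: assoc[OF l qsM iH])
      also have "\<dots> = ?c ` liftop f (map sing (take 0 qs) @ [f (take m (drop 0 qs))] @ map sing (drop (0+m) qs))"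
        by (simp only: take_0 drop_0 list.map(1) append_Nil add_0)
      also have "\<dots> = liftop (qF m M f z N) (map sing (take 0 (map ?c qs)) @ [qF m M f z N (take m (drop 0 (map ?c qs)))] @ map sing (drop (0+m) (map ?c qs)))"
        by (rule ASSOC_Q[OF l qsM m0, symmetric])
      also have "\<dots> = liftop (qF m M f z N) ([qF m M f z N (take m (map ?c qs))] @ map sing (drop m (map ?c qs)))"
        by (simp only: take_0 drop_0 list.map(1) append_Nil add_0)
      finally show "liftop (qF m M f z N) (map sing (take i Xs) @ [qF m M f z N (take m (drop i Xs))] @ map sing (drop (i+m) Xs))
        = liftop (qF m M f z N) ([qF m M f z N (take m Xs)] @ map sing (drop m Xs))"
        unfolding qs1 .
    next
      fix Xs i assume H: "length Xs = m \<and> set Xs \<subseteq> ?c ` Q \<and> i < m"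
      obtain qs where qs1: "map ?c qs = Xs" and qs2: "set qs \<subseteq> Q"
        using reps[OF H[THEN conjunct2, THEN conjunct1]] by blast
      have "length (map ?c qs) = m" unfolding qs1 by (rule H[THEN conjunct1])
      then have l: "length qs = m" by (simp only: length_map)
      have qsM: "set qs \<subseteq> M" using qs2 QM by (rule order.trans)
      have iH: "i < m" by (rule H[THEN conjunct2, THEN conjunct2])
      have "liftop (qF m M f z N) ((map sing (map ?c qs))[i := ?c ` Q]) = ?c ` liftop f ((map sing qs)[i := Q])"
        by (rule REP_Q[OF l qsM iH QM])
      also have "\<dots> = ?c ` Q" by (simp only: Qrep[OF l qs2 iH])
      finally show "liftop (qF m M f z N) ((map sing Xs)[i := ?c ` Q]) = ?c ` Q"
        unfolding qs1 .
    qed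
  next
    fix rs X assume H: "length rs = n-1 \<and> set rs \<subseteq> R \<and> X \<in> ?c ` Q"
    then obtain q where q: "q \<in> Q" "X = ?c q" by auto
    show "qG m M f g z N rs X \<subseteq> ?c ` Q"
      using E2[of rs q] Qg[of rs q] H q QM by auto
  qed
  have NE: "?c ` Q \<noteq> ?c ` M"
  proof
    assume E: "?c ` Q = ?c ` M"
    obtain x where x: "x \<in> M" "x \<notin> Q" using Qprop QM by auto
    then obtain q where "q \<in> Q" "?c x = ?c q" using E by (metis imageE imageI)
    then show False using LQ[OF QM NQ Qc x(1)] x by auto
  qed
  have one_s: "\<And>rs i. length rs = n-1 \<Longrightarrow> set rs \<subseteq> R \<Longrightarrow> i < n-1 \<Longrightarrow>
     length (rs ! i # replicate (n-2) one) = n-1 \<and> set (rs ! i # replicate (n-2) one) \<subseteq> R"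
    using n2 oneR by (auto simp: set_replicate_conv_if)
  have "phi_classical_prime m n R one M f g \<phi> Q \<longleftrightarrow>
         weakly_classical_prime m n R one (?c ` M) (qF m M f z N) (qG m M f g z N) N (?c ` Q)"
    unfolding phi_classical_prime_def weakly_classical_prime_def N_def[symmetric]
  proof (intro iffI conjI allI impI)
    assume H: "subhypermodule m n R M f g Q \<and> Q \<noteq> M \<and>
     (\<forall>rs a. length rs = n - 1 \<and> set rs \<subseteq> R \<and> a \<in> M \<and> g rs a \<subseteq> Q - N \<longrightarrow>
             (\<exists>i<n - 1. g (rs ! i # replicate (n - 2) one) a \<subseteq> Q))"
    show "subhypermodule m n R (?c ` M) (qF m M f z N) (qG m M f g z N) (?c ` Q)" by (rule SUBQ)
    show "?c ` Q \<noteq> ?c ` M" by (rule NE)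
    fix rs X assume H2: "length rs = n - 1 \<and> set rs \<subseteq> R \<and> X \<in> ?c ` M \<and>
       N \<notin> qG m M f g z N rs X \<and> qG m M f g z N rs X \<subseteq> ?c ` Q"
    have rs1: "length rs = n - 1" by (rule H2[THEN conjunct1])
    have rs2: "set rs \<subseteq> R" by (rule H2[THEN conjunct2, THEN conjunct1])
    have XM: "X \<in> ?c ` M" by (rule H2[THEN conjunct2, THEN conjunct2, THEN conjunct1])
    have h12: "N \<notin> qG m M f g z N rs X \<and> qG m M f g z N rs X \<subseteq> ?c ` Q"
      by (rule H2[THEN conjunct2, THEN conjunct2, THEN conjunct2])
    obtain a where a: "a \<in> M" and Xa: "X = ?c a" using XM by (rule imageE)
    have h12': "N \<notin> qG m M f g z N rs (?c a) \<and> qG m M f g z N rs (?c a) \<subseteq> ?c ` Q"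
      using h12 unfolding Xa .
    have ga: "g rs a \<subseteq> Q - N" using E1[OF rs1 rs2 a] h12' by (rule iffD1)
    have HH: "\<forall>rs a. length rs = n - 1 \<and> set rs \<subseteq> R \<and> a \<in> M \<and> g rs a \<subseteq> Q - N \<longrightarrow>
             (\<exists>i<n - 1. g (rs ! i # replicate (n - 2) one) a \<subseteq> Q)"
      by (rule H[THEN conjunct2, THEN conjunct2])
    have "\<exists>i<n - 1. g (rs ! i # replicate (n - 2) one) a \<subseteq> Q"
      using HH rs1 rs2 a ga by blast
    then obtain i where i: "i < n-1" and gi: "g (rs ! i # replicate (n - 2) one) a \<subseteq> Q" by blast
    have os: "length (rs ! i # replicate (n-2) one) = n-1" "set (rs ! i # replicate (n-2) one) \<subseteq> R"
      using one_s[OF rs1 rs2 i] by blast+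
    have "qG m M f g z N (rs ! i # replicate (n - 2) one) (?c a) \<subseteq> ?c ` Q"
      using E2[OF os a] gi by (rule iffD2)
    then have "qG m M f g z N (rs ! i # replicate (n - 2) one) X \<subseteq> ?c ` Q" unfolding Xa .
    then show "\<exists>i<n - 1. qG m M f g z N (rs ! i # replicate (n - 2) one) X \<subseteq> ?c ` Q"
      using i by blast
  next
    assume H: "subhypermodule m n R (?c ` M) (qF m M f z N) (qG m M f g z N) (?c ` Q) \<and>
     ?c ` Q \<noteq> ?c ` M \<and>
     (\<forall>rs x. length rs = n - 1 \<and> set rs \<subseteq> R \<and> x \<in> ?c ` M \<and>
             N \<notin> qG m M f g z N rs x \<and> qG m M f g z N rs x \<subseteq> ?c ` Q \<longrightarrow>
             (\<exists>i<n - 1. qG m M f g z N (rs ! i # replicate (n - 2) one) x \<subseteq> ?c ` Q))"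
    show "subhypermodule m n R M f g Q" by (rule Qsub)
    show "Q \<noteq> M" by (rule Qprop)
    fix rs a assume H2: "length rs = n - 1 \<and> set rs \<subseteq> R \<and> a \<in> M \<and> g rs a \<subseteq> Q - N"
    have rs1: "length rs = n - 1" by (rule H2[THEN conjunct1])
    have rs2: "set rs \<subseteq> R" by (rule H2[THEN conjunct2, THEN conjunct1])
    have a: "a \<in> M" by (rule H2[THEN conjunct2, THEN conjunct2, THEN conjunct1])
    have ga: "g rs a \<subseteq> Q - N" by (rule H2[THEN conjunct2, THEN conjunct2, THEN conjunct2])
    have h12: "N \<notin> qG m M f g z N rs (?c a) \<and> qG m M f g z N rs (?c a) \<subseteq> ?c ` Q"
      using E1[OF rs1 rs2 a] ga by (rule iffD2)
    have caM: "?c a \<in> ?c ` M" using a by (rule imageI)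
    have HH: "\<forall>rs x. length rs = n - 1 \<and> set rs \<subseteq> R \<and> x \<in> ?c ` M \<and>
             N \<notin> qG m M f g z N rs x \<and> qG m M f g z N rs x \<subseteq> ?c ` Q \<longrightarrow>
             (\<exists>i<n - 1. qG m M f g z N (rs ! i # replicate (n - 2) one) x \<subseteq> ?c ` Q)"
      by (rule H[THEN conjunct2, THEN conjunct2])
    have "\<exists>i<n - 1. qG m M f g z N (rs ! i # replicate (n - 2) one) (?c a) \<subseteq> ?c ` Q"
      using HH[rule_format, of rs "?c a"] rs1 rs2 caM h12 by blast
    then obtain i where i: "i < n-1" and qi: "qG m M f g z N (rs ! i # replicate (n - 2) one) (?c a) \<subseteq> ?c ` Q"
      by blast
    have os: "length (rs ! i # replicate (n-2) one) = n-1" "set (rs ! i # replicate (n-2) one) \<subseteq> R"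
      using one_s[OF rs1 rs2 i] by blast+
    have "g (rs ! i # replicate (n - 2) one) a \<subseteq> Q"
      using E2[OF os a] qi by (rule iffD1)
    then show "\<exists>i<n - 1. g (rs ! i # replicate (n - 2) one) a \<subseteq> Q"
      using i by blast
  qed
  then show ?thesis unfolding qcarrier_def qsub_def N_def by simp
qed

end
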